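(* Consider problem (P2) with constraints C1 and C4 removed, i.e. maximize over the binary selection $x\in\{0,1\}^K$ (equivalently over sets $\Psi\subseteq\mathcal{K}$) the value $EE^*_\Psi$. Suppose the trading EEs satisfy, after relabeling, $EE^*_1>EE^*_2>\dots>EE^*_K$. Algorithm 2 is: set $\Psi=\emptyset$; for $k=1,\dots,K$ in this order, if $EE^*_{\Psi\cup\{k\}}>EE^*_\Psi$ then replace $\Psi$ by $\Psi\cup\{k\}$; output $\Psi$. Then the set $\Psi$ output by Algorithm 2 is optimal, i.e. $EE^*_\Psi\ge EE^*_{\Psi'}$ for every $\Psi'\subseteq\mathcal{K}$.
   Context: Setting: $\mathcal{K}=\{1,\dots,K\}$ macro users (MUs), $\mathcal{N}=\{1,\dots,N\}$ small-cell users (SUs). Constants: $N_0>0$, $\xi\in(0,1]$, $P_{\rm c}>0$; for each $k$: $W^k_{MC}>0$, $R^k_{MC}>0$, $h_k>0$, $g_{k,n}>0$ ($n\in\mathcal{N}$); for each $n$: $B^n_{SC}>0$, $g_n>0$. Let $k'\in\arg\max_{n}g_{k,n}$ and $\rho(b,p,g)=b\log_2(1+\frac{pg}{bN_0})$ ($=0$ if $b=0$). For $\Psi\subseteq\mathcal{K}$, $EE^*_\Psi$ is the optimal value of: with $x_k=\mathbf 1[k\in\Psi]$, maximize over $p_n\ge0$, $p_{k,k'}\ge0$, $b_{k,k'}\ge0$, $q_k\ge0$, $w_k\ge0$ $$\frac{\sum_{n}\rho(B^n_{SC},p_n,g_n)+\sum_{k}x_k\rho(b_{k,k'},p_{k,k'},g_{k,k'})}{\sum_n\frac{p_n}{\xi}+\sum_kx_k\frac{p_{k,k'}}{\xi}+\sum_kx_k\frac{q_k}{\xi}+P_{\rm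 c}}$$ subject only to $b_{k,k'}+w_k=x_kW^k_{MC}$ and $\rho(w_k,q_k,h_k)=x_kR^k_{MC}$ for all $k$ (no total power constraint and no minimum system rate constraint). For each $k$, the trading EE $EE^*_k$ is the optimal value of: maximize over $p_{k,k'}\ge0$, $b_{k,k'}\ge0$, $q_k\ge0$, $w_k\ge0$ the ratio $\frac{\rho(b_{k,k'},p_{k,k'},g_{k,k'})}{p_{k,k'}/\xi+q_k/\xi}$ subject to $b_{k,k'}+w_k\le W^k_{MC}$ and $\rho(w_k,q_k,h_k)\ge R^k_{MC}$. *)

theory Defs
  imports Complex_Main
begin

definition rho :: "real \<Rightarrow> real \<Rightarrow> real \<Rightarrow> real \<Rightarrow> real" where
  "rho N0 b p g = (if b = 0 then 0 else b * log 2 (1 + p * g / (b * N0)))"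

definition xind :: "nat set \<Rightarrow> nat \<Rightarrow> real" where
  "xind Psi k = (if k \<in> Psi then 1 else 0)"

text \<open>Parameters: N0, xi, Pc, K, N, W (= W^k_MC), R (= R^k_MC), h (= h_k), g (= g_{k,n}),
  B (= B^n_SC), gs (= g_n), kp (= k').  Variables: p (= p_n), pk (= p_{k,k'}),
  b (= b_{k,k'}), q (= q_k), w (= w_k).\<close>
definition EE_set ::
  "real \<Rightarrow> real \<Rightarrow> real \<Rightarrow> nat \<Rightarrow> nat \<Rightarrow> (nat \<Rightarrow> real) \<Rightarrow> (nat \<Rightarrow> real) \<Rightarrow> (nat \<Rightarrow> real)
   \<Rightarrow> (nat \<Rightarrow> nat \<Rightarrow> real) \<Rightarrow> (nat \<Rightarrow> real) \<Rightarrow> (nat \<Rightarrow> real) \<Rightarrow> (nat \<Rightarrow> nat) \<Rightarrow> nat set \<Rightarrow> real" where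
  "EE_set N0 xi Pc K N W R h g B gs kp Psi =
     Sup { ((\<Sum>n\<in>{1..N}. rho N0 (B n) (p n) (gs n))
              + (\<Sum>k\<in>{1..K}. xind Psi k * rho N0 (b k) (pk k) (g k (kp k))))
           / ((\<Sum>n\<in>{1..N}. p n / xi) + (\<Sum>k\<in>{1..K}. xind Psi k * (pk k / xi))
              + (\<Sum>k\<in>{1..K}. xind Psi k * (q k / xi)) + Pc)
         | p pk b q w.
           (\<forall>n\<in>{1..N}. 0 \<le> p n) \<and>
           (\<forall>k\<in>{1..K}. 0 \<le> pk k \<and> 0 \<le> b k \<and> 0 \<le> q k \<and> 0 \<le> w k \<and>
              b k + w k = xind Psi k * W k \<and>
              rho N0 (w k) (q k) (h k) = xind Psi k * R k) }"

definition EE_trade ::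
  "real \<Rightarrow> real \<Rightarrow> (nat \<Rightarrow> real) \<Rightarrow> (nat \<Rightarrow> real) \<Rightarrow> (nat \<Rightarrow> real)
   \<Rightarrow> (nat \<Rightarrow> nat \<Rightarrow> real) \<Rightarrow> (nat \<Rightarrow> nat) \<Rightarrow> nat \<Rightarrow> real" where
  "EE_trade N0 xi W R h g kp k =
     Sup { rho N0 b pk (g k (kp k)) / (pk / xi + q / xi)
         | pk b q w. 0 \<le> pk \<and> 0 \<le> b \<and> 0 \<le> q \<and> 0 \<le> w \<and>
              b + w \<le> W k \<and> R k \<le> rho N0 w q (h k) }"

definition alg2 :: "(nat set \<Rightarrow> real) \<Rightarrow> nat \<Rightarrow> nat set" where
  "alg2 EE K = foldl (\<lambda>Psi k. if EE (insert k Psi) > EE Psi then insert k Psi else Psi) {} [1..<K+1]"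

end

theory Submission imports Defs "HOL-Analysis.Analysis" begin

lemma rho_nonneg:
  assumes "N0 > 0" "b \<ge> 0" "p \<ge> 0" "g \<ge> 0"
  shows "rho N0 b p g \<ge> 0"
proof (cases "b = 0")
  case True thus ?thesis by (simp add: rho_def)
next
  case False
  hence "b > 0" using assms by simp
  have "1 + p * g / (b * N0) \<ge> 1" using assms \<open>b>0\<close> by simp
  hence "log 2 (1 + p * g / (b * N0)) \<ge> 0" by simp
  thus ?thesis using \<open>b>0\<close> by (simp add: rho_def)
qed

lemma rho_zero_p: "rho N0 b 0 g = 0"
  by (simp add: rho_def)

lemma rho_le_lin:
  assumes "N0 > 0" "b \<ge> 0" "p \<ge> 0" "g \<ge> 0"
  shows "rho N0 b p g \<le> p * g / (N0 * ln 2)"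
proof (cases "b = 0")
  case True thus ?thesis using assms by (simp add: rho_def)
next
  case False
  hence bp: "b > 0" using assms by simp
  define x where "x = p * g / (b * N0)"
  have x0: "x \<ge> 0" using assms bp by (simp add: x_def)
  have "ln (1 + x) \<le> x" using ln_add_one_self_le_self x0 by blast
  hence "b * ln (1+x) \<le> b * x" using bp by (simp add: mult_left_mono)
  also have "b * x = p * g / N0" using bp by (simp add: x_def)
  finally have "b * ln (1+x) \<le> p * g / N0" .
  hence "b * ln (1+x) / ln 2 \<le> p * g / N0 / ln 2" by (intro divide_right_mono) simp_all
  thus ?thesis using False by (simp add: rho_def log_def x_def)
qed

lemma rho_growth:
  assumes "N0 > 0" "0 \<le> b" "b \<le> Wm" "p \<ge> 0" "g \<ge> 0" "t \<ge> 1"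
  shows "rho N0 b p g \<le> (p * g / (N0 * t) + Wm * ln t) / ln 2"
proof (cases "b = 0")
  case True
  have "0 \<le> (p * g / (N0 * t) + Wm * ln t)" using assms by simp
  thus ?thesis using True by (simp add: rho_def)
next
  case False
  hence bp: "b > 0" using assms by simp
  define x where "x = p * g / (b * N0)"
  have x0: "x \<ge> 0" using assms bp by (simp add: x_def)
  have "ln ((1 + x)/t) \<le> (1+x)/t - 1" using x0 assms by (intro ln_le_minus_one) simp
  hence l: "ln (1 + x) \<le> ln t + (1+x)/t - 1" using x0 assms by (simp add: ln_div)
  have "b * ln (1+x) \<le> b * (ln t + (1+x)/t - 1)" using l bp by (simp add: mult_left_mono)
  also have "\<dots> = b * ln t + b/t - b + b*x/t" by (simp add: algebra_simps add_divide_distrib)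
  also have "b*x/t = p * g / (N0 * t)" using bp by (simp add: x_def)
  also have "b/t - b \<le> 0" using bp assms by (simp add: divide_le_eq)
  hence "b * ln t + b/t - b + p * g / (N0 * t) \<le> Wm * ln t + p * g / (N0 * t)"
    using assms bp by (smt (verit) ln_ge_zero mult_right_mono)
  finally have "b * ln (1+x) / ln 2 \<le> (p * g / (N0 * t) + Wm * ln t) / ln 2"
    by (simp add: divide_right_mono add.commute)
  thus ?thesis using False by (simp add: rho_def log_def x_def)
qed

lemma rho_mono_b:
  assumes "N0 > 0" "0 \<le> b1" "b1 \<le> b2" "p \<ge> 0" "g \<ge> 0"
  shows "rho N0 b1 p g \<le> rho N0 b2 p g"
proof (cases "b1 = 0")
  case True thus ?thesis using rho_nonneg[of N0 b2 p g] assms by (simp add: rho_def)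
next
  case False
  hence b1: "b1 > 0" using assms by simp
  hence b2: "b2 > 0" using assms by simp
  define s where "s = b1 / b2"
  have s0: "0 < s" "s \<le> 1" using b1 b2 assms by (auto simp: s_def)
  define y where "y = p * g / (b1 * N0)"
  have y0: "y \<ge> 0" using assms b1 by (simp add: y_def)
  have "(1 - s) * ln 1 + s * ln (1+y) \<le> ln ((1-s) *\<^sub>R 1 + s *\<^sub>R (1+y))"
    using concave_onD[OF ln_concave, of s 1 "1+y"] s0 y0 by simp
  hence "s * ln (1+y) \<le> ln (1 + s * y)" by (simp add: algebra_simps)
  moreover have "s * y = p * g / (b2 * N0)" using b1 b2 by (simp add: s_def y_def)
  ultimately have "s * ln (1+y) \<le> ln (1 + p * g / (b2 * N0))" by simp
  hence "b2 * (s * ln (1+y)) \<le> b2 * ln (1 + p * g / (b2 * N0))" using b2 by (simp add: mult_left_mono)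
  hence "b1 * ln (1+y) \<le> b2 * ln (1 + p * g / (b2 * N0))" using b2 by (simp add: s_def)
  hence "b1 * ln (1+y) / ln 2 \<le> b2 * ln (1 + p * g / (b2 * N0)) / ln 2" by (simp add: divide_right_mono)
  thus ?thesis using b1 b2 by (simp add: rho_def log_def y_def)
qed


lemma qsol:
  assumes "N0 > 0" "w > 0" "Rk > 0" "hk > 0"
  shows "rho N0 w ((2 powr (Rk/w) - 1) * w * N0 / hk) hk = Rk"
    and "(2 powr (Rk/w) - 1) * w * N0 / hk > 0"
proof -
  have "2 powr (Rk/w) > 2 powr 0" using assms by (intro powr_less_mono) simp_all
  hence "2 powr (Rk/w) > 1" by simp
  hence p: "(2 powr (Rk/w) - 1) * w * N0 / hk > 0" using assms by simp
  have "1 + (2 powr (Rk/w) - 1) * w * N0 / hk * hk / (w * N0) = 2 powr (Rk/w)"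
    using assms by (simp add: field_simps)
  thus "rho N0 w ((2 powr (Rk/w) - 1) * w * N0 / hk) hk = Rk"
    using assms by (simp add: rho_def)
  show "(2 powr (Rk/w) - 1) * w * N0 / hk > 0" by (fact p)
qed

locale sys =
  fixes N0 xi Pc :: real and K N :: nat
    and W R h :: "nat \<Rightarrow> real" and g :: "nat \<Rightarrow> nat \<Rightarrow> real"
    and B gs :: "nat \<Rightarrow> real" and kp :: "nat \<Rightarrow> nat"
  assumes N0: "N0 > 0" and xi: "0 < xi" and Pc: "Pc > 0"
    and MU: "\<And>k. k\<in>{1..K} \<Longrightarrow> W k > 0 \<and> R k > 0 \<and> h k > 0 \<and> g k (kp k) > 0"
    and SU: "\<And>n. n\<in>{1..N} \<Longrightarrow> B n > 0 \<and> gs n > 0"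
begin

definition feas where "feas Psi (p::nat\<Rightarrow>real) (pk::nat\<Rightarrow>real) b q w \<longleftrightarrow> (\<forall>n\<in>{1..N}. 0 \<le> p n) \<and>
           (\<forall>k\<in>{1..K}. 0 \<le> pk k \<and> 0 \<le> b k \<and> 0 \<le> q k \<and> 0 \<le> w k \<and>
              b k + w k = xind Psi k * W k \<and>
              rho N0 (w k) (q k) (h k) = xind Psi k * R k)"
definition num where "num Psi p pk b = (\<Sum>n\<in>{1..N}. rho N0 (B n) (p n) (gs n))
              + (\<Sum>k\<in>{1..K}. xind Psi k * rho N0 (b k) (pk k) (g k (kp k)))"
definition den where "den Psi p pk q = (\<Sum>n\<in>{1..N}. p n / xi) + (\<Sum>k\<in>{1..K}. xind Psi k * (pk k / xi))
              + (\<Sum>k\<in>{1..K}. xind Psi k * (q k / xi)) + Pc"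
definition V where "V Psi = {num Psi p pk b / den Psi p pk q | p pk b q w. feas Psi p pk b q w}"
definition E where "E Psi = Sup (V Psi)"

lemma E_eq: "EE_set N0 xi Pc K N W R h g B gs kp Psi = E Psi"
  unfolding EE_set_def E_def V_def num_def den_def feas_def by simp

definition efeas where "efeas k (pk::real) b q w \<longleftrightarrow> 0 \<le> pk \<and> 0 \<le> b \<and> 0 \<le> q \<and> 0 \<le> w \<and>
   b + w = W k \<and> rho N0 w q (h k) = R k"
definition tset where "tset k = { rho N0 b pk (g k (kp k)) / (pk / xi + q / xi)
         | pk b q w. 0 \<le> pk \<and> 0 \<le> b \<and> 0 \<le> q \<and> 0 \<le> w \<and>
              b + w \<le> W k \<and> R k \<le> rho N0 w q (h k) }"
definition ET where "ET k = Sup (tset k)"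

lemma ET_eq: "EE_trade N0 xi W R h g kp k = ET k"
  unfolding EE_trade_def ET_def tset_def by simp

definition phi where "phi lam k pk b q = rho N0 b pk (g k (kp k)) - lam * ((pk + q) / xi)"

lemma nd: "num Psi p pk b - lam * den Psi p pk q =
   (\<Sum>n\<in>{1..N}. rho N0 (B n) (p n) (gs n) - lam * (p n / xi))
   + (\<Sum>k\<in>{1..K}. xind Psi k * phi lam k (pk k) (b k) (q k)) - lam * Pc"
  by (simp add: num_def den_def phi_def sum_subtractf sum_distrib_left sum.distrib
      algebra_simps add_divide_distrib)

lemma den_ge: assumes "feas Psi p pk b q w" shows "den Psi p pk q \<ge> Pc"
proof -
  have "(\<Sum>n\<in>{1..N}. p n / xi) \<ge> 0" using assms xi by (intro sum_nonneg) (auto simp: feas_def)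
  moreover have "(\<Sum>k\<in>{1..K}. xind Psi k * (pk k / xi)) \<ge> 0" using assms xi
    by (intro sum_nonneg) (auto simp: feas_def xind_def)
  moreover have "(\<Sum>k\<in>{1..K}. xind Psi k * (q k / xi)) \<ge> 0" using assms xi
    by (intro sum_nonneg) (auto simp: feas_def xind_def)
  ultimately show ?thesis by (simp add: den_def)
qed

lemma den_pos: "feas Psi p pk b q w \<Longrightarrow> den Psi p pk q > 0"
  using den_ge Pc by (meson less_le_trans)

lemma num_nonneg: assumes "feas Psi p pk b q w" shows "num Psi p pk b \<ge> 0"
proof -
  have "(\<Sum>n\<in>{1..N}. rho N0 (B n) (p n) (gs n)) \<ge> 0" using assms SU N0
    by (intro sum_nonneg rho_nonneg) (auto simp: feas_def less_imp_le)
  moreover have "(\<Sum>k\<in>{1..K}. xind Psi k * rho N0 (b k) (pk k) (g k (kp k))) \<ge> 0" using assms MU N0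
    by (intro sum_nonneg mult_nonneg_nonneg rho_nonneg) (auto simp: feas_def xind_def less_imp_le)
  ultimately show ?thesis by (simp add: num_def)
qed

definition qs where "qs k = (2 powr (R k/W k) - 1) * W k * N0 / h k"

lemma efeas_ex: "k \<in> {1..K} \<Longrightarrow> efeas k 0 0 (qs k) (W k)"
  using qsol[of N0 "W k" "R k" "h k"] MU[of k] N0 by (auto simp: efeas_def qs_def less_imp_le)

lemma efeas_qpos: "k \<in> {1..K} \<Longrightarrow> efeas k pk b q w \<Longrightarrow> q > 0"
  using MU[of k] by (cases "q = 0") (auto simp: efeas_def rho_def split: if_splits)

lemma feas_ex: "feas Psi (\<lambda>_. 0) (\<lambda>_. 0) (\<lambda>_. 0) (\<lambda>k. xind Psi k * qs k) (\<lambda>k. xind Psi k * W k)"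
  unfolding feas_def
proof (intro conjI ballI)
  fix k assume k: "k \<in> {1..K}"
  have e: "efeas k 0 0 (qs k) (W k)" by (rule efeas_ex[OF k])
  show "0 \<le> xind Psi k * qs k" "0 \<le> xind Psi k * W k"
    using e by (auto simp: xind_def efeas_def)
  show "0 + xind Psi k * W k = xind Psi k * W k" by simp
  show "rho N0 (xind Psi k * W k) (xind Psi k * qs k) (h k) = xind Psi k * R k"
    using e by (auto simp: xind_def efeas_def rho_def)
qed auto

lemma V_ne: "V Psi \<noteq> {}"
  using feas_ex[of Psi] unfolding V_def by blast


lemma num_bound:
  assumes th: "th > 0"
  shows "\<exists>C\<ge>0. \<forall>Psi p pk b q w. feas Psi p pk b q w \<longrightarrow> num Psi p pk b \<le> th/2 * den Psi p pk q + C"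
proof -
  define Gm where "Gm = (\<Sum>n\<in>{1..N}. gs n) + (\<Sum>k\<in>{1..K}. g k (kp k))"
  have gs_le: "gs n \<le> Gm" if "n \<in> {1..N}" for n
  proof -
    have "gs n \<le> (\<Sum>n\<in>{1..N}. gs n)" using that SU by (intro member_le_sum) (auto simp: less_imp_le)
    moreover have "0 \<le> (\<Sum>k\<in>{1..K}. g k (kp k))" using MU by (intro sum_nonneg) (auto simp: less_imp_le)
    ultimately show ?thesis by (simp add: Gm_def)
  qed
  have gk_le: "g k (kp k) \<le> Gm" if "k \<in> {1..K}" for k
  proof -
    have "g k (kp k) \<le> (\<Sum>k\<in>{1..K}. g k (kp k))" using that MU by (intro member_le_sum) (auto simp: less_imp_le)
    moreover have "0 \<le> (\<Sum>n\<in>{1..N}. gs n)" using SU by (intro sum_nonneg) (auto simp: less_imp_le)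
    ultimately show ?thesis by (simp add: Gm_def)
  qed
  define t where "t = max 1 (2*xi*Gm/(N0*ln 2*th))"
  define L where "L = ln t / ln 2"
  have t1: "t \<ge> 1" by (simp add: t_def)
  have L0: "L \<ge> 0" using t1 by (simp add: L_def)
  have ln2: "ln (2::real) > 0" by simp
  have key: "rho N0 bb pp gg \<le> th/2 * (pp/xi) + Wm * L"
    if "0 \<le> bb" "bb \<le> Wm" "0 \<le> pp" "0 < gg" "gg \<le> Gm" for bb Wm pp gg
  proof -
    have r: "rho N0 bb pp gg \<le> (pp * gg / (N0 * t) + Wm * ln t) / ln 2"
      using rho_growth[of N0 bb Wm pp gg t] that N0 t1 by simp
    have "2*xi*Gm/(N0*ln 2*th) \<le> t" by (simp add: t_def)
    hence "2*xi*Gm \<le> t * (N0*ln 2*th)" using N0 ln2 th by (simp add: divide_le_eq)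
    hence "2*xi*gg \<le> t * (N0*ln 2*th)" using that xi by (smt (verit) mult_left_mono)
    hence "pp * (2*xi*gg) \<le> pp * (t * (N0*ln 2*th))" using that by (simp add: mult_left_mono)
    hence "pp * gg / (N0 * t) / ln 2 \<le> th/2 * (pp/xi)"
      using N0 t1 xi ln2 by (simp add: field_simps)
    thus ?thesis using r by (simp add: L_def add_divide_distrib)
  qed
  define C where "C = L * ((\<Sum>n\<in>{1..N}. B n) + (\<Sum>k\<in>{1..K}. W k))"
  have C0: "C \<ge> 0" using L0 SU MU unfolding C_def
    by (intro mult_nonneg_nonneg add_nonneg_nonneg sum_nonneg) (auto simp: less_imp_le)
  show ?thesis
  proof (intro exI[of _ C] conjI allI impI C0)
    fix Psi p pk b q w assume f: "feas Psi p pk b q w"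
    have s1: "(\<Sum>n\<in>{1..N}. rho N0 (B n) (p n) (gs n)) \<le> (\<Sum>n\<in>{1..N}. th/2 * (p n/xi) + B n * L)"
      using f SU gs_le by (intro sum_mono key) (auto simp: feas_def less_imp_le)
    have s2: "(\<Sum>k\<in>{1..K}. xind Psi k * rho N0 (b k) (pk k) (g k (kp k)))
        \<le> (\<Sum>k\<in>{1..K}. th/2 * (xind Psi k * (pk k/xi)) + W k * L)"
    proof (intro sum_mono)
      fix k assume k: "k \<in> {1..K}"
      show "xind Psi k * rho N0 (b k) (pk k) (g k (kp k)) \<le> th/2 * (xind Psi k * (pk k/xi)) + W k * L"
      proof (cases "k \<in> Psi")
        case True
        have fk: "0 \<le> pk k" "0 \<le> b k" "0 \<le> w k" "b k + w k = W k"
          using f k True by (auto simp: feas_def xind_def)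
        have "rho N0 (b k) (pk k) (g k (kp k)) \<le> th/2 * (pk k/xi) + W k * L"
          using fk MU[OF k] gk_le[OF k] by (intro key) auto
        thus ?thesis using True by (simp add: xind_def)
      next
        case False thus ?thesis using MU[OF k] L0 by (simp add: xind_def)
      qed
    qed
    have q0: "(\<Sum>k\<in>{1..K}. xind Psi k * (q k / xi)) \<ge> 0" using f xi
      by (intro sum_nonneg) (auto simp: feas_def xind_def)
    have "num Psi p pk b \<le> (\<Sum>n\<in>{1..N}. th/2 * (p n/xi) + B n * L) + (\<Sum>k\<in>{1..K}. th/2 * (xind Psi k * (pk k/xi)) + W k * L)"
      using s1 s2 by (simp add: num_def)
    also have "\<dots> = th/2 * ((\<Sum>n\<in>{1..N}. p n/xi) + (\<Sum>k\<in>{1..K}. xind Psi k * (pk k/xi))) + C"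
      by (simp add: sum.distrib sum_distrib_left sum_distrib_right C_def algebra_simps)
    also have "\<dots> \<le> th/2 * den Psi p pk q + C"
      using q0 th Pc by (simp add: den_def)
    finally show "num Psi p pk b \<le> th/2 * den Psi p pk q + C" .
  qed
qed

lemma V_bdd: "bdd_above (V Psi)"
proof -
  obtain C where C: "C \<ge> 0" "\<forall>Psi p pk b q w. feas Psi p pk b q w \<longrightarrow> num Psi p pk b \<le> 1/2 * den Psi p pk q + C"
    using num_bound[of 1] by auto
  show ?thesis unfolding bdd_above_def
  proof (intro exI[of _ "1/2 + C/Pc"] ballI)
    fix v assume "v \<in> V Psi"
    then obtain p pk b q w where f: "feas Psi p pk b q w" and v: "v = num Psi p pk b / den Psi p pk q"
      unfolding V_def by blast
    have d: "den Psi p pk q \<ge> Pc" "den Psi p pk q > 0" using den_ge[OF f] den_pos[OF f] by auto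
    have "num Psi p pk b \<le> 1/2 * den Psi p pk q + C" using C f by blast
    hence "v \<le> (1/2 * den Psi p pk q + C) / den Psi p pk q" using d by (simp add: v divide_right_mono)
    also have "\<dots> = 1/2 + C / den Psi p pk q" using d by (simp add: add_divide_distrib)
    also have "C / den Psi p pk q \<le> C / Pc" using d C Pc by (intro divide_left_mono) auto
    finally show "v \<le> 1/2 + C/Pc" by simp
  qed
qed

lemma V_mem: "feas Psi p pk b q w \<Longrightarrow> num Psi p pk b / den Psi p pk q \<in> V Psi"
  unfolding V_def by blast

lemma V_le_E: "feas Psi p pk b q w \<Longrightarrow> num Psi p pk b / den Psi p pk q \<le> E Psi"
  unfolding E_def by (intro cSup_upper V_mem V_bdd)

lemma E_nonneg: "E Psi \<ge> 0"
proof -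
  have f: "feas Psi (\<lambda>_. 0) (\<lambda>_. 0) (\<lambda>_. 0) (\<lambda>k. xind Psi k * qs k) (\<lambda>k. xind Psi k * W k)" by (rule feas_ex)
  show ?thesis using V_le_E[OF f] num_nonneg[OF f] den_pos[OF f]
    by (meson divide_nonneg_pos order_trans)
qed


lemma tset_ne: assumes k: "k \<in> {1..K}" shows "tset k \<noteq> {}"
proof -
  have e: "0 \<le> (0::real) \<and> 0 \<le> (0::real) \<and> 0 \<le> qs k \<and> 0 \<le> W k \<and> 0 + W k \<le> W k \<and> R k \<le> rho N0 (W k) (qs k) (h k)"
    using efeas_ex[OF k] by (simp add: efeas_def)
  have "rho N0 0 0 (g k (kp k)) / (0 / xi + qs k / xi) \<in> tset k"
    unfolding tset_def using e by blast
  thus ?thesis by blast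
qed

lemma tset_bdd: assumes k: "k \<in> {1..K}" shows "bdd_above (tset k)"
proof -
  define M where "M = xi * g k (kp k) / (N0 * ln 2)"
  show ?thesis unfolding bdd_above_def
  proof (intro exI[of _ M] ballI)
    fix x assume "x \<in> tset k"
    then obtain pk b q w where t: "0 \<le> pk" "0 \<le> b" "0 \<le> q" "0 \<le> w" "b + w \<le> W k"
      "R k \<le> rho N0 w q (h k)" and x: "x = rho N0 b pk (g k (kp k)) / (pk / xi + q / xi)"
      unfolding tset_def by blast
    have M0: "M \<ge> 0" using MU[OF k] xi N0 by (simp add: M_def)
    have "rho N0 b pk (g k (kp k)) \<le> pk * g k (kp k) / (N0 * ln 2)"
      using rho_le_lin[of N0 b pk "g k (kp k)"] t N0 MU[OF k] by simp
    also have "\<dots> = M * (pk / xi)" using xi by (simp add: M_def)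
    also have "\<dots> \<le> M * (pk / xi + q / xi)" using M0 t xi by (intro mult_left_mono) auto
    finally have r: "rho N0 b pk (g k (kp k)) \<le> M * (pk / xi + q / xi)" .
    show "x \<le> M"
    proof (cases "pk / xi + q / xi = 0")
      case True thus ?thesis using x M0 by simp
    next
      case False
      hence "pk / xi + q / xi > 0" using t xi by (smt (verit) divide_nonneg_pos)
      thus ?thesis using r x by (simp add: divide_le_eq)
    qed
  qed
qed

lemma efeas_le_ET:
  assumes k: "k \<in> {1..K}" and e: "efeas k pk b q w"
  shows "rho N0 b pk (g k (kp k)) \<le> ET k * ((pk + q) / xi)"
proof -
  have q: "q > 0" by (rule efeas_qpos[OF k e])
  have c: "(pk + q)/xi > 0" using q e xi by (simp add: efeas_def)
  have "rho N0 b pk (g k (kp k)) / (pk / xi + q / xi) \<in> tset k"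
    using e unfolding tset_def efeas_def by force
  hence "rho N0 b pk (g k (kp k)) / ((pk + q) / xi) \<le> ET k"
    unfolding ET_def using tset_bdd[OF k] by (simp add: add_divide_distrib cSup_upper)
  thus ?thesis using c by (metis pos_divide_le_eq mult.commute)
qed

lemma conv:
  assumes k: "k \<in> {1..K}" and x: "x \<in> tset k"
  shows "\<exists>pk b q w. efeas k pk b q w \<and> x * ((pk + q) / xi) \<le> rho N0 b pk (g k (kp k))"
proof -
  obtain pk0 b0 q0 w0 where t: "0 \<le> pk0" "0 \<le> b0" "0 \<le> q0" "0 \<le> w0" "b0 + w0 \<le> W k"
      "R k \<le> rho N0 w0 q0 (h k)" and xd: "x = rho N0 b0 pk0 (g k (kp k)) / (pk0 / xi + q0 / xi)"
    using x unfolding tset_def by blast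
  have Wk: "W k > 0" "R k > 0" "h k > 0" "g k (kp k) > 0" using MU[OF k] by auto
  have w0: "w0 > 0" using t Wk by (cases "w0 = 0") (auto simp: rho_def)
  define q where "q = (2 powr (R k/w0) - 1) * w0 * N0 / h k"
  have qr: "rho N0 w0 q (h k) = R k" "q > 0" using qsol[of N0 w0 "R k" "h k"] N0 w0 Wk by (auto simp: q_def)
  have "R k \<le> w0 * log 2 (1 + q0 * h k / (w0 * N0))" using t w0 by (simp add: rho_def)
  hence "R k / w0 \<le> log 2 (1 + q0 * h k / (w0 * N0))" using w0 by (simp add: divide_le_eq mult.commute)
  hence "2 powr (R k / w0) \<le> 1 + q0 * h k / (w0 * N0)"
    using t w0 N0 Wk by (subst (asm) le_log_iff) (auto intro: add_pos_nonneg)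
  hence "(2 powr (R k / w0) - 1) * (w0 * N0) \<le> q0 * h k" using w0 N0 by (simp add: field_simps)
  hence qq: "q \<le> q0" using Wk w0 N0 by (simp add: q_def field_simps)
  define b where "b = W k - w0"
  have e: "efeas k pk0 b q w0" using t qr by (simp add: efeas_def b_def)
  have x0: "x \<ge> 0" using xd t N0 Wk xi by (simp add: rho_nonneg)
  have d0: "pk0 / xi + q0 / xi > 0" using qr qq t xi by (smt (verit) divide_nonneg_pos divide_pos_pos)
  have "x * ((pk0 + q) / xi) \<le> x * ((pk0 + q0) / xi)" using x0 qq xi
    by (intro mult_left_mono divide_right_mono) auto
  also have "\<dots> = rho N0 b0 pk0 (g k (kp k))" using d0 by (simp add: xd add_divide_distrib)
  also have "\<dots> \<le> rho N0 b pk0 (g k (kp k))" using t N0 Wk by (intro rho_mono_b) (auto simp: b_def)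
  finally show ?thesis using e by blast
qed

lemma ET_gt:
  assumes k: "k \<in> {1..K}" and gt: "ET k > lam"
  shows "\<exists>pk b q w. efeas k pk b q w \<and> phi lam k pk b q > 0"
proof -
  obtain x where x: "x \<in> tset k" "x > lam" using less_cSupD[OF tset_ne[OF k]] gt unfolding ET_def by blast
  obtain pk b q w where e: "efeas k pk b q w" and r: "x * ((pk + q) / xi) \<le> rho N0 b pk (g k (kp k))"
    using conv[OF k x(1)] by blast
  have c: "(pk + q)/xi > 0" using efeas_qpos[OF k e] e xi by (simp add: efeas_def)
  have "lam * ((pk + q)/xi) < x * ((pk + q)/xi)" using x c by (intro mult_strict_right_mono)
  hence "phi lam k pk b q > 0" using r by (simp add: phi_def)
  thus ?thesis using e by blast
qed

lemma ET_le:
  assumes k: "k \<in> {1..K}" and le: "ET k \<le> lam" and e: "efeas k pk b q w"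
  shows "phi lam k pk b q \<le> 0"
proof -
  have c: "(pk + q)/xi > 0" using efeas_qpos[OF k e] e xi by (simp add: efeas_def)
  have "ET k * ((pk + q)/xi) \<le> lam * ((pk + q)/xi)" using le c by (intro mult_right_mono) auto
  thus ?thesis using efeas_le_ET[OF k e] by (simp add: phi_def)
qed


lemma feas_efeas: "feas Psi p pk b q w \<Longrightarrow> k \<in> {1..K} \<Longrightarrow> k \<in> Psi \<Longrightarrow> efeas k (pk k) (b k) (q k) (w k)"
  by (auto simp: feas_def efeas_def xind_def)

lemma mix:
  assumes f1: "feas Psi1 p pk1 b1 q1 w1"
    and fc: "\<And>k. k \<in> S \<Longrightarrow> k \<in> {1..K} \<Longrightarrow> efeas k (fpk k) (fb k) (fq k) (fw k)"
    and cov: "\<And>k. k \<in> Psi2 \<Longrightarrow> k \<in> {1..K} \<Longrightarrow> k \<in> S \<or> k \<in> Psi1"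
  shows "\<exists>pk2 b2 q2 w2. feas Psi2 p pk2 b2 q2 w2 \<and> (\<forall>lam.
     num Psi2 p pk2 b2 - lam * den Psi2 p pk2 q2 = (num Psi1 p pk1 b1 - lam * den Psi1 p pk1 q1)
     + (\<Sum>k\<in>{1..K}. xind Psi2 k * (if k \<in> S then phi lam k (fpk k) (fb k) (fq k) else phi lam k (pk1 k) (b1 k) (q1 k))
          - xind Psi1 k * phi lam k (pk1 k) (b1 k) (q1 k)))"
proof -
  define pk2 where "pk2 k = (if k \<in> S then fpk k else pk1 k)" for k
  define b2 where "b2 k = (if k \<in> Psi2 then (if k \<in> S then fb k else b1 k) else 0)" for k
  define q2 where "q2 k = (if k \<in> S then fq k else q1 k)" for k
  define w2 where "w2 k = (if k \<in> Psi2 then (if k \<in> S then fw k else w1 k) else 0)" for k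
  have f2: "feas Psi2 p pk2 b2 q2 w2"
    unfolding feas_def
  proof (intro conjI ballI)
    show "\<And>n. n \<in> {1..N} \<Longrightarrow> 0 \<le> p n" using f1 by (simp add: feas_def)
    fix k assume k: "k \<in> {1..K}"
    have e1: "0 \<le> pk1 k" "0 \<le> b1 k" "0 \<le> q1 k" "0 \<le> w1 k" using f1 k by (auto simp: feas_def)
    show "0 \<le> pk2 k" "0 \<le> q2 k" using e1 fc[of k] k by (auto simp: pk2_def q2_def efeas_def)
    show "0 \<le> b2 k" "0 \<le> w2 k" using e1 fc[of k] k by (auto simp: b2_def w2_def efeas_def)
    show "b2 k + w2 k = xind Psi2 k * W k"
    proof (cases "k \<in> Psi2")
      case True
      show ?thesis
      proof (cases "k \<in> S")
        case True2: True thus ?thesis using True fc[OF True2 k] by (simp add: b2_def w2_def xind_def efeas_def)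
      next
        case False
        hence "k \<in> Psi1" using cov[OF True k] by simp
        thus ?thesis using True False f1 k by (simp add: b2_def w2_def xind_def feas_def)
      qed
    next
      case False thus ?thesis by (simp add: b2_def w2_def xind_def)
    qed
    show "rho N0 (w2 k) (q2 k) (h k) = xind Psi2 k * R k"
    proof (cases "k \<in> Psi2")
      case True
      show ?thesis
      proof (cases "k \<in> S")
        case True2: True thus ?thesis using True fc[OF True2 k] by (simp add: q2_def w2_def xind_def efeas_def)
      next
        case False
        hence "k \<in> Psi1" using cov[OF True k] by simp
        thus ?thesis using True False f1 k by (simp add: q2_def w2_def xind_def feas_def)
      qed
    next
      case False thus ?thesis by (simp add: q2_def w2_def xind_def rho_def)
    qed
  qed
  have "num Psi2 p pk2 b2 - lam * den Psi2 p pk2 q2 = (num Psi1 p pk1 b1 - lam * den Psi1 p pk1 q1)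
     + (\<Sum>k\<in>{1..K}. xind Psi2 k * (if k \<in> S then phi lam k (fpk k) (fb k) (fq k) else phi lam k (pk1 k) (b1 k) (q1 k))
          - xind Psi1 k * phi lam k (pk1 k) (b1 k) (q1 k))" for lam
  proof -
    have t: "xind Psi2 k * phi lam k (pk2 k) (b2 k) (q2 k) =
        xind Psi2 k * (if k \<in> S then phi lam k (fpk k) (fb k) (fq k) else phi lam k (pk1 k) (b1 k) (q1 k))" for k
      by (simp add: xind_def pk2_def b2_def q2_def)
    show ?thesis unfolding nd t by (simp add: sum_subtractf)
  qed
  thus ?thesis using f2 by blast
qed


lemma near:
  assumes eta: "eta > 0"
  shows "\<exists>p pk b q w. feas Psi p pk b q w \<and> num Psi p pk b - E Psi * den Psi p pk q > - eta"
proof (cases "E Psi = 0")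
  case True
  have f: "feas Psi (\<lambda>_. 0) (\<lambda>_. 0) (\<lambda>_. 0) (\<lambda>k. xind Psi k * qs k) (\<lambda>k. xind Psi k * W k)" by (rule feas_ex)
  show ?thesis using num_nonneg[OF f] True eta f by force
next
  case False
  define lam where "lam = E Psi"
  have lam: "lam > 0" using False E_nonneg[of Psi] by (simp add: lam_def)
  obtain C where C: "C \<ge> 0" "\<forall>Psi p pk b q w. feas Psi p pk b q w \<longrightarrow> num Psi p pk b \<le> (lam/2)/2 * den Psi p pk q + C"
    using num_bound[of "lam/2"] lam by auto
  define D0 where "D0 = 4*C/lam + 1"
  have "4*C/lam \<ge> 0" using C(1) lam by simp
  hence D0: "D0 > 0" by (simp add: D0_def)
  define del where "del = min (lam/2) (eta/D0)"
  have del: "del > 0" using lam eta D0 by (simp add: del_def)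
  have "lam - del < Sup (V Psi)" using del by (simp add: lam_def E_def)
  then obtain v where v: "v \<in> V Psi" "v > lam - del" using less_cSupD[OF V_ne] by blast
  then obtain p pk b q w where f: "feas Psi p pk b q w" and vd: "v = num Psi p pk b / den Psi p pk q"
    unfolding V_def by blast
  define nn where "nn = num Psi p pk b"
  define dd where "dd = den Psi p pk q"
  have dd: "dd > 0" using den_pos[OF f] by (simp add: dd_def)
  have "nn \<le> (lam/2)/2 * dd + C" using C(2) f unfolding nn_def dd_def by blast
  hence nb: "nn \<le> lam/4 * dd + C" by simp
  have gt: "nn > (lam - del) * dd" using v vd dd by (simp add: nn_def dd_def pos_less_divide_eq)
  have "del \<le> lam/2" unfolding del_def by (rule min.cobounded1)
  hence "lam - del \<ge> lam/2" by simp
  hence "nn > lam/2 * dd" using gt dd by (smt (verit) mult_right_mono)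
  hence "lam/2 * dd < lam/4 * dd + C" using nb by linarith
  hence "lam * dd < 4 * C" by linarith
  hence "dd < 4 * C / lam" using lam by (simp add: pos_less_divide_eq mult.commute)
  hence ddD: "dd < D0" by (simp add: D0_def)
  have "del * dd \<le> (eta/D0) * dd" using dd by (intro mult_right_mono) (auto simp: del_def)
  also have "(eta/D0) * dd < (eta/D0) * D0" using ddD eta D0 by (intro mult_strict_left_mono) auto
  also have "\<dots> = eta" using D0 by simp
  finally have "del * dd < eta" .
  hence "nn - lam * dd > - eta" using gt by (simp add: algebra_simps)
  hence "num Psi p pk b - E Psi * den Psi p pk q > - eta" by (simp add: nn_def dd_def lam_def)
  thus ?thesis using f by blast
qed

lemma add_improves:
  assumes m: "m \<in> {1..K}" "m \<notin> Psi" and e: "efeas m pk0 b0 q0 w0"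
    and ph: "phi (E Psi) m pk0 b0 q0 > 0"
  shows "E (insert m Psi) > E Psi"
proof -
  define lam where "lam = E Psi"
  define eta where "eta = phi lam m pk0 b0 q0"
  obtain p pk b q w where f: "feas Psi p pk b q w" and nr: "num Psi p pk b - lam * den Psi p pk q > - eta"
    using near[of eta Psi] ph by (auto simp: eta_def lam_def)
  obtain pk2 b2 q2 w2 where f2: "feas (insert m Psi) p pk2 b2 q2 w2" and
    eq: "num (insert m Psi) p pk2 b2 - lam * den (insert m Psi) p pk2 q2 = (num Psi p pk b - lam * den Psi p pk q)
     + (\<Sum>k\<in>{1..K}. xind (insert m Psi) k * (if k \<in> {m} then phi lam k ((\<lambda>_. pk0) k) ((\<lambda>_. b0) k) ((\<lambda>_. q0) k) else phi lam k (pk k) (b k) (q k))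
          - xind Psi k * phi lam k (pk k) (b k) (q k))"
    using mix[of Psi p pk b q w "{m}" "\<lambda>_. pk0" "\<lambda>_. b0" "\<lambda>_. q0" "\<lambda>_. w0" "insert m Psi"] f e
    by auto
  have "(\<Sum>k\<in>{1..K}. xind (insert m Psi) k * (if k \<in> {m} then phi lam k ((\<lambda>_. pk0) k) ((\<lambda>_. b0) k) ((\<lambda>_. q0) k) else phi lam k (pk k) (b k) (q k))
          - xind Psi k * phi lam k (pk k) (b k) (q k)) = (\<Sum>k\<in>{1..K}. if k = m then eta else 0)"
    using m by (intro sum.cong) (auto simp: xind_def eta_def)
  also have "\<dots> = eta" using m by simp
  finally have "num (insert m Psi) p pk2 b2 - lam * den (insert m Psi) p pk2 q2 > 0" using eq nr by simp
  hence "num (insert m Psi) p pk2 b2 / den (insert m Psi) p pk2 q2 > lam"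
    using den_pos[OF f2] by (simp add: pos_less_divide_eq)
  thus ?thesis using V_le_E[OF f2] by (simp add: lam_def)
qed


lemma add_strict:
  assumes m: "m \<in> {1..K}" "m \<notin> Psi" and inc: "E Psi < E (insert m Psi)"
  shows "ET m > E (insert m Psi)"
proof (rule ccontr)
  assume "\<not> ET m > E (insert m Psi)"
  hence le: "ET m \<le> E (insert m Psi)" by simp
  define lam where "lam = E (insert m Psi)"
  define lam' where "lam' = E Psi"
  have lam: "lam > 0" using inc E_nonneg[of Psi] by (simp add: lam_def)
  have ll: "lam' < lam" using inc by (simp add: lam_def lam'_def)
  obtain C where C: "C \<ge> 0" "\<forall>Psi p pk b q w. feas Psi p pk b q w \<longrightarrow> num Psi p pk b \<le> (lam/2)/2 * den Psi p pk q + C"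
    using num_bound[of "lam/2"] lam by auto
  define D0 where "D0 = 4*C/lam + 1"
  have "4*C/lam \<ge> 0" using C(1) lam by simp
  hence D0: "D0 > 0" by (simp add: D0_def)
  define a where "a = (lam - lam') * Pc / D0"
  have a: "a > 0" using ll Pc D0 by (simp add: a_def)
  define mu where "mu = max (lam/2) (lam - a)"
  have mu: "mu < lam" using lam a by (simp add: mu_def)
  have "Sup (V (insert m Psi)) \<le> mu"
  proof (rule cSup_least[OF V_ne])
    fix v assume "v \<in> V (insert m Psi)"
    then obtain p pk b q w where f: "feas (insert m Psi) p pk b q w" and vd: "v = num (insert m Psi) p pk b / den (insert m Psi) p pk q"
      unfolding V_def by blast
    define nn where "nn = num (insert m Psi) p pk b"
    define dd where "dd = den (insert m Psi) p pk q"
    have dd: "dd > 0" "dd \<ge> Pc" using den_pos[OF f] den_ge[OF f] by (auto simp: dd_def)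
    show "v \<le> mu"
    proof (cases "v \<le> lam/2")
      case True thus ?thesis by (simp add: mu_def)
    next
      case False
      have "nn \<le> (lam/2)/2 * dd + C" using C(2) f unfolding nn_def dd_def by blast
      hence nb: "nn \<le> lam/4 * dd + C" by simp
      have "lam/2 < nn/dd" using False vd by (simp add: nn_def dd_def)
      hence "nn > lam/2 * dd" using dd by (simp add: pos_less_divide_eq)
      hence "lam/2 * dd < lam/4 * dd + C" using nb by linarith
      hence "lam * dd < 4 * C" by linarith
      hence "dd < 4 * C / lam" using lam by (simp add: pos_less_divide_eq mult.commute)
      hence ddD: "dd < D0" by (simp add: D0_def)
      obtain pk2 b2 q2 w2 where f2: "feas Psi p pk2 b2 q2 w2" and
        eq: "num Psi p pk2 b2 - lam * den Psi p pk2 q2 = (num (insert m Psi) p pk b - lam * den (insert m Psi) p pk q)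
         + (\<Sum>k\<in>{1..K}. xind Psi k * (if k \<in> {} then phi lam k (pk k) (b k) (q k) else phi lam k (pk k) (b k) (q k))
          - xind (insert m Psi) k * phi lam k (pk k) (b k) (q k))"
        using mix[of "insert m Psi" p pk b q w "{}" pk b q w Psi] f by auto
      have "(\<Sum>k\<in>{1..K}. xind Psi k * (if k \<in> {} then phi lam k (pk k) (b k) (q k) else phi lam k (pk k) (b k) (q k))
          - xind (insert m Psi) k * phi lam k (pk k) (b k) (q k)) = (\<Sum>k\<in>{1..K}. if k = m then - phi lam m (pk m) (b m) (q m) else 0)"
        using m by (intro sum.cong) (auto simp: xind_def)
      also have "\<dots> = - phi lam m (pk m) (b m) (q m)" using m by simp
      finally have eq2: "num Psi p pk2 b2 - lam * den Psi p pk2 q2 = (nn - lam * dd) - phi lam m (pk m) (b m) (q m)"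
        using eq by (simp add: nn_def dd_def)
      have phm: "phi lam m (pk m) (b m) (q m) \<le> 0"
        using ET_le[OF m(1) le[folded lam_def] feas_efeas[OF f m(1)]] by simp
      define nn' where "nn' = num Psi p pk2 b2"
      define dd' where "dd' = den Psi p pk2 q2"
      have dd': "dd' > 0" "dd' \<ge> Pc" using den_pos[OF f2] den_ge[OF f2] by (auto simp: dd'_def)
      have "nn' / dd' \<le> lam'" using V_le_E[OF f2] by (simp add: nn'_def dd'_def lam'_def)
      hence "nn' \<le> lam' * dd'" using dd' by (simp add: pos_divide_le_eq)
      hence "nn - lam * dd \<le> (lam' - lam) * dd'" using eq2 phm by (simp add: nn'_def dd'_def algebra_simps)
      also have "\<dots> \<le> (lam' - lam) * Pc" using dd' ll by (intro mult_left_mono_neg) auto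
      finally have x1: "nn - lam * dd \<le> - ((lam - lam') * Pc)" by (simp add: algebra_simps)
      have "(lam - lam') * Pc / D0 \<le> (lam - lam') * Pc / dd" using ll Pc dd ddD
        by (intro divide_left_mono) auto
      hence "a \<le> (lam - lam') * Pc / dd" by (simp add: a_def)
      hence "a * dd \<le> (lam - lam') * Pc" using dd by (simp add: pos_le_divide_eq)
      hence "nn \<le> (lam - a) * dd" using x1 by (simp add: algebra_simps)
      hence "v \<le> lam - a" using vd dd by (simp add: nn_def dd_def pos_divide_le_eq)
      thus ?thesis by (simp add: mu_def)
    qed
  qed
  hence "lam \<le> mu" by (simp add: lam_def E_def)
  thus False using mu by simp
qed


definition stepf where "stepf = (\<lambda>Psi k. if E (insert k Psi) > E Psi then insert k Psi else Psi)"

lemma greedy_inv: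
  assumes ord: "\<forall>i\<in>{1..K}. \<forall>j\<in>{1..K}. i < j \<longrightarrow> ET i > ET j"
  shows "j \<le> K \<Longrightarrow> foldl stepf {} [1..<j+1] \<subseteq> {1..j} \<and>
     (\<forall>k\<in>{1..j} - foldl stepf {} [1..<j+1]. ET k \<le> E (foldl stepf {} [1..<j+1])) \<and>
     (\<forall>k\<in>foldl stepf {} [1..<j+1]. ET k > E (foldl stepf {} [1..<j+1]))"
proof (induction j)
  case 0 thus ?case by simp
next
  case (Suc j)
  define G where "G = foldl stepf {} [1..<j+1]"
  have IH: "G \<subseteq> {1..j}" "\<forall>k\<in>{1..j} - G. ET k \<le> E G" "\<forall>k\<in>G. ET k > E G"
    using Suc by (auto simp: G_def)
  define m where "m = Suc j"
  have fo: "foldl stepf {} [1..<Suc j+1] = stepf G m"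
    by (simp add: G_def m_def)
  have m: "m \<in> {1..K}" "m \<notin> G" using Suc IH by (auto simp: m_def)
  show ?case
  proof (cases "E (insert m G) > E G")
    case True
    have st: "stepf G m = insert m G" using True by (simp add: stepf_def)
    have Em: "ET m > E (insert m G)" by (rule add_strict[OF m True])
    have A: "insert m G \<subseteq> {1..Suc j}" using IH by (auto simp: m_def)
    have Bq: "\<forall>k\<in>{1..Suc j} - insert m G. ET k \<le> E (insert m G)"
      using IH(2) True by (force simp: m_def)
    have Cq: "\<forall>k\<in>insert m G. ET k > E (insert m G)"
    proof
      fix k assume k: "k \<in> insert m G"
      show "ET k > E (insert m G)"
      proof (cases "k = m")
        case True thus ?thesis using Em by simp
      next
        case False
        hence kG: "k \<in> G" using k by simp
        hence "k \<in> {1..K}" "k < m" using IH(1) m by (auto simp: m_def)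
        hence "ET k > ET m" using ord m by blast
        thus ?thesis using Em by simp
      qed
    qed
    have "foldl stepf {} [1..<Suc j+1] = insert m G" using fo st by simp
    thus ?thesis using A Bq Cq by (simp only:)
  next
    case False
    have st: "stepf G m = G" using False by (simp add: stepf_def)
    have Em: "ET m \<le> E G"
    proof (rule ccontr)
      assume "\<not> ET m \<le> E G"
      then obtain pk b q w where e: "efeas m pk b q w" "phi (E G) m pk b q > 0"
        using ET_gt[OF m(1)] by force
      show False using add_improves[OF m e] False by simp
    qed
    have A: "G \<subseteq> {1..Suc j}" using IH by auto
    have Bq: "\<forall>k\<in>{1..Suc j} - G. ET k \<le> E G"
      using IH(2) Em by (auto simp: m_def le_Suc_eq)
    have "foldl stepf {} [1..<Suc j+1] = G" using fo st by simp
    thus ?thesis using A Bq IH(3) by (simp only:)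
  qed
qed

lemma final:
  assumes ord: "\<forall>i\<in>{1..K}. \<forall>j\<in>{1..K}. i < j \<longrightarrow> ET i > ET j"
    and Ps: "Psi' \<subseteq> {1..K}"
  shows "E Psi' \<le> E (alg2 E K)"
proof -
  define G where "G = alg2 E K"
  have GG: "G = foldl stepf {} [1..<K+1]" by (simp add: G_def alg2_def stepf_def)
  have inv: "G \<subseteq> {1..K}" "\<forall>k\<in>{1..K} - G. ET k \<le> E G" "\<forall>k\<in>G. ET k > E G"
    using greedy_inv[OF ord, of K] by (auto simp: GG)
  define lam where "lam = E G"
  have "\<forall>k\<in>G. \<exists>t. efeas k (fst t) (fst (snd t)) (fst (snd (snd t))) (snd (snd (snd t)))
      \<and> phi lam k (fst t) (fst (snd t)) (fst (snd (snd t))) > 0"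
  proof
    fix k assume k: "k \<in> G"
    have kK: "k \<in> {1..K}" using k inv(1) by blast
    have "ET k > lam" using k inv(3) by (simp add: lam_def)
    then obtain pk b q w where "efeas k pk b q w" "phi lam k pk b q > 0"
      using ET_gt[OF kK] by blast
    thus "\<exists>t. efeas k (fst t) (fst (snd t)) (fst (snd (snd t))) (snd (snd (snd t)))
      \<and> phi lam k (fst t) (fst (snd t)) (fst (snd (snd t))) > 0"
      by (intro exI[of _ "(pk, b, q, w)"]) simp
  qed
  then obtain F where F: "\<forall>k\<in>G. efeas k (fst (F k)) (fst (snd (F k))) (fst (snd (snd (F k)))) (snd (snd (snd (F k))))
      \<and> phi lam k (fst (F k)) (fst (snd (F k))) (fst (snd (snd (F k)))) > 0"
    by (metis bchoice)
  have "Sup (V Psi') \<le> lam"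
  proof (rule cSup_least[OF V_ne])
    fix v assume "v \<in> V Psi'"
    then obtain p pk b q w where f: "feas Psi' p pk b q w" and vd: "v = num Psi' p pk b / den Psi' p pk q"
      unfolding V_def by blast
    obtain pk2 b2 q2 w2 where f2: "feas G p pk2 b2 q2 w2" and
      eq: "num G p pk2 b2 - lam * den G p pk2 q2 = (num Psi' p pk b - lam * den Psi' p pk q)
         + (\<Sum>k\<in>{1..K}. xind G k * (if k \<in> G - Psi' then phi lam k (fst (F k)) (fst (snd (F k))) (fst (snd (snd (F k))))
              else phi lam k (pk k) (b k) (q k))
          - xind Psi' k * phi lam k (pk k) (b k) (q k))"
      using mix[of Psi' p pk b q w "G - Psi'" "\<lambda>k. fst (F k)" "\<lambda>k. fst (snd (F k))" "\<lambda>k. fst (snd (snd (F k)))"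
          "\<lambda>k. snd (snd (snd (F k)))" G] f F by auto
    have "(\<Sum>k\<in>{1..K}. xind G k * (if k \<in> G - Psi' then phi lam k (fst (F k)) (fst (snd (F k))) (fst (snd (snd (F k))))
              else phi lam k (pk k) (b k) (q k))
          - xind Psi' k * phi lam k (pk k) (b k) (q k)) \<ge> 0"
    proof (intro sum_nonneg)
      fix k assume k: "k \<in> {1..K}"
      show "0 \<le> xind G k * (if k \<in> G - Psi' then phi lam k (fst (F k)) (fst (snd (F k))) (fst (snd (snd (F k))))
              else phi lam k (pk k) (b k) (q k))
          - xind Psi' k * phi lam k (pk k) (b k) (q k)"
      proof (cases "k \<in> G")
        case True
        thus ?thesis using F by (auto simp: xind_def less_imp_le)
      next
        case False
        show ?thesis
        proof (cases "k \<in> Psi'")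
          case True
          have "phi lam k (pk k) (b k) (q k) \<le> 0"
            using ET_le[OF k _ feas_efeas[OF f k True]] inv(2) k False by (auto simp: lam_def)
          thus ?thesis using False True by (simp add: xind_def)
        next
          case F2: False thus ?thesis using False by (simp add: xind_def)
        qed
      qed
    qed
    hence ge: "num G p pk2 b2 - lam * den G p pk2 q2 \<ge> num Psi' p pk b - lam * den Psi' p pk q"
      using eq by simp
    have "num G p pk2 b2 / den G p pk2 q2 \<le> lam" using V_le_E[OF f2] by (simp add: lam_def)
    hence "num G p pk2 b2 - lam * den G p pk2 q2 \<le> 0" using den_pos[OF f2] by (simp add: pos_divide_le_eq)
    hence "num Psi' p pk b \<le> lam * den Psi' p pk q" using ge by simp
    thus "v \<le> lam" using vd den_pos[OF f] by (simp add: pos_divide_le_eq)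
  qed
  thus ?thesis by (simp add: E_def lam_def G_def)
qed

end

theorem corollary1:
  fixes N0 xi Pc :: real and K N :: nat
    and W R h :: "nat \<Rightarrow> real" and g :: "nat \<Rightarrow> nat \<Rightarrow> real"
    and B gs :: "nat \<Rightarrow> real" and kp :: "nat \<Rightarrow> nat"
  assumes "N0 > 0" and "0 < xi" and "xi \<le> 1" and "Pc > 0"
    and "\<forall>k\<in>{1..K}. W k > 0 \<and> R k > 0 \<and> h k > 0 \<and> (\<forall>n\<in>{1..N}. g k n > 0)"
    and "\<forall>n\<in>{1..N}. B n > 0 \<and> gs n > 0"
    and "N \<ge> 1"
    and "\<forall>k\<in>{1..K}. kp k \<in> {1..N} \<and> (\<forall>n\<in>{1..N}. g k n \<le> g k (kp k))"
    and "\<forall>i\<in>{1..K}. \<forall>j\<in>{1..K}. i < j \<longrightarrow>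
           EE_trade N0 xi W R h g kp i > EE_trade N0 xi W R h g kp j"
  shows "\<forall>Psi'. Psi' \<subseteq> {1..K} \<longrightarrow>
           EE_set N0 xi Pc K N W R h g B gs kp (alg2 (EE_set N0 xi Pc K N W R h g B gs kp) K)
           \<ge> EE_set N0 xi Pc K N W R h g B gs kp Psi'"
proof -
  interpret S: sys N0 xi Pc K N W R h g B gs kp
  proof
    show "N0 > 0" "0 < xi" "Pc > 0" using assms by auto
    fix k assume k: "k \<in> {1..K}"
    thus "W k > 0 \<and> R k > 0 \<and> h k > 0 \<and> g k (kp k) > 0" using assms(5,8) by blast
  next
    fix n assume "n \<in> {1..N}" thus "B n > 0 \<and> gs n > 0" using assms(6) by blast
  qed
  have EEf: "EE_set N0 xi Pc K N W R h g B gs kp = S.E" using S.E_eq by (intro ext)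
  have ord: "\<forall>i\<in>{1..K}. \<forall>j\<in>{1..K}. i < j \<longrightarrow> S.ET i > S.ET j"
    using assms(9) by (simp add: S.ET_eq)
  show ?thesis unfolding EEf using S.final[OF ord] by blast
qed

end
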